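(* In the symmetric first-price sealed-bid auction with $n=2$ bidders and uniform prior $F=\mathrm{Id}$ on $[0,1]$, and for $0<\delta\le\frac{1}{10}$, the operator $\beta\mapsto DU(\vec\beta)$ on $\mathcal{B}_\delta$ is neither monotone, nor pseudo-monotone, nor quasi-monotone (in the senses defined in the context).
   Context: $V:=W^{1,1}(0,1)$. For $\delta>0$, $\mathcal{B}_\delta:=\{\beta\in V:0\le\beta\le1\text{ a.e.},\ \delta\le\beta'\text{ a.e.},\ \beta(0)=0\}$. Two bidders with values i.i.d. uniform on $[0,1]$. First-price ex-ante utility of bidder 1 bidding by $\beta$ against the other bidding by $\tilde\beta$: $U(\beta,\tilde\beta)=\int_0^1(x-\beta(x))\int_0^1\chi_{\{\beta(x)>\tilde\beta(y)\}}\,\mathrm{d}y\,\mathrm{d}x$. For $\beta\in\mathcal{B}_\delta$, $\vec\beta=(\beta,\beta)$ and $DU(\vec\beta)[d]:=\lim_{\varepsilon\to0}\varepsilon^{-1}(U(\beta+\varepsilon d,\beta)-U(\beta,\beta))$ for $d\in V$. The operator is monotone if $(DU(\vec{\tilde\beta})-DU(\vec\beta))[\tilde\beta-\beta]\le0$ for all $\beta,\tilde\beta\in\mathcal{B}_\delta$; pseudo-monotone if for all $\beta,\tilde\beta\in\mathcal{B}_\delta$, $DU(\vec\beta)[\tilde\beta-\beta]\le0$ implies $DU(\vec{\tilde\beta})[\tilde\beta-\beta]\le0$; quasi-monotone if for all $\beta,\tilde\beta\in\mathcal{B}_\delta$, $DU(\vec\beta)[\tilde\beta-\beta]<0$ implies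 $DU(\vec{\tilde\beta})[\tilde\beta-\beta]\le0$. *)

theory Defs
  imports "HOL-Analysis.Analysis"
begin

text \<open>Functions are \<open>real \<Rightarrow> real\<close>; only their values on [0,1] matter.
  The Sobolev space W^{1,1}(0,1) is represented by its absolutely continuous
  representatives: f is an indefinite integral of an L^1 function g
  (its weak derivative).\<close>

definition weak_deriv :: "(real \<Rightarrow> real) \<Rightarrow> (real \<Rightarrow> real) \<Rightarrow> bool" where
  "weak_deriv f g \<longleftrightarrow> set_integrable lborel {0..1} g \<and>
     (\<forall>x\<in>{0..1}. f x = f 0 + (LBINT t:{0..x}. g t))"

definition W11 :: "(real \<Rightarrow> real) set" where
  "W11 = {f. \<exists>g. weak_deriv f g}"

definition Bdelta :: "real \<Rightarrow> (real \<Rightarrow> real) set" where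
  "Bdelta \<delta> = {\<beta>. \<beta> \<in> W11 \<and> (\<forall>x\<in>{0..1}. 0 \<le> \<beta> x \<and> \<beta> x \<le> 1) \<and>
      (\<exists>g. weak_deriv \<beta> g \<and> (AE x in lebesgue_on {0..1}. \<delta> \<le> g x)) \<and> \<beta> 0 = 0}"

text \<open>First-price ex-ante utility, two bidders, values i.i.d. uniform on [0,1].\<close>
definition U :: "(real \<Rightarrow> real) \<Rightarrow> (real \<Rightarrow> real) \<Rightarrow> real" where
  "U \<beta> \<beta>' = (LBINT x:{0..1}. (x - \<beta> x) *
      (LBINT y:{0..1}. (if \<beta> x > \<beta>' y then 1 else 0)))"

definition DU :: "(real \<Rightarrow> real) \<Rightarrow> (real \<Rightarrow> real) \<Rightarrow> real" where
  "DU \<beta> d = Lim (at 0) (\<lambda>\<epsilon>. (U (\<lambda>x. \<beta> x + \<epsilon> * d x) \<beta> - U \<beta> \<beta>) / \<epsilon>)"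

definition monotone_DU :: "real \<Rightarrow> bool" where
  "monotone_DU \<delta> \<longleftrightarrow> (\<forall>\<beta>\<in>Bdelta \<delta>. \<forall>\<beta>'\<in>Bdelta \<delta>.
     DU \<beta>' (\<lambda>x. \<beta>' x - \<beta> x) - DU \<beta> (\<lambda>x. \<beta>' x - \<beta> x) \<le> 0)"

definition pseudo_monotone_DU :: "real \<Rightarrow> bool" where
  "pseudo_monotone_DU \<delta> \<longleftrightarrow> (\<forall>\<beta>\<in>Bdelta \<delta>. \<forall>\<beta>'\<in>Bdelta \<delta>.
     DU \<beta> (\<lambda>x. \<beta>' x - \<beta> x) \<le> 0 \<longrightarrow> DU \<beta>' (\<lambda>x. \<beta>' x - \<beta> x) \<le> 0)"

definition quasi_monotone_DU :: "real \<Rightarrow> bool" where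
  "quasi_monotone_DU \<delta> \<longleftrightarrow> (\<forall>\<beta>\<in>Bdelta \<delta>. \<forall>\<beta>'\<in>Bdelta \<delta>.
     DU \<beta> (\<lambda>x. \<beta>' x - \<beta> x) < 0 \<longrightarrow> DU \<beta>' (\<lambda>x. \<beta>' x - \<beta> x) \<le> 0)"

end

theory Submission imports Defs begin

lemma inner_eq:
  fixes \<beta> :: "real \<Rightarrow> real"
  assumes "0 \<le> t" "t \<le> 1" and "\<And>y. 0 \<le> y \<Longrightarrow> y \<le> 1 \<Longrightarrow> y \<noteq> t \<Longrightarrow> (v > \<beta> y \<longleftrightarrow> y < t)"
  shows "(LBINT y:{0..1}. (if v > \<beta> y then 1 else 0::real)) = t"
proof -
  have "(LBINT y:{0..1}. (if v > \<beta> y then 1 else 0::real)) = integral\<^sup>L lborel (\<lambda>y. indicator {0..t} y :: real)"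
    unfolding set_lebesgue_integral_def
    apply (rule integral_discrete_difference[where X="{t}"])
    using assms by (auto simp: indicator_def)
  also have "\<dots> = t" using assms by simp
  finally show ?thesis .
qed

lemma int01: "integrable lborel (indicat_real {0..1::real})"
  by (auto simp: integrable_indicator_iff)

lemma DU_formula:
  fixes \<beta> d G g :: "real \<Rightarrow> real" and L K :: real and S :: "real set"
  assumes Gdef: "\<And>v. (LBINT y:{0..1}. (if v > \<beta> y then 1 else 0::real)) = G v"
    and Lip: "\<And>u v. \<bar>G u - G v\<bar> \<le> L * \<bar>u - v\<bar>" and L0: "0 \<le> L"
    and Gb: "\<And>v. \<bar>G v\<bar> \<le> 1"
    and cb: "continuous_on UNIV \<beta>" and cd: "continuous_on UNIV d"
    and bd: "\<And>x. x \<in> {0..1} \<Longrightarrow> \<bar>d x\<bar> \<le> K" and bb: "\<And>x. x \<in> {0..1} \<Longrightarrow> \<bar>\<beta> x\<bar> \<le> K"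
    and S: "finite S"
    and der: "\<And>x. x \<in> {0..1} \<Longrightarrow> x \<notin> S \<Longrightarrow> (G has_real_derivative g x) (at (\<beta> x))"
    and gm: "g \<in> borel_measurable borel"
  shows "DU \<beta> d = (LBINT x:{0..1}. d x * (- G (\<beta> x) + (x - \<beta> x) * g x))"
proof -
  have Gc: "continuous_on UNIV G"
    by (rule lipschitz_on_continuous_on[of L]) (auto intro!: lipschitz_onI simp: dist_real_def L0 Lip)
  have [measurable]: "G \<in> borel_measurable borel" "\<beta> \<in> borel_measurable borel" "d \<in> borel_measurable borel"
    "g \<in> borel_measurable borel"
    using Gc cb cd gm by (auto intro: borel_measurable_continuous_onI)
  define F where "F \<epsilon> = (LBINT x:{0..1}. (x - (\<beta> x + \<epsilon> * d x)) * G (\<beta> x + \<epsilon> * d x))" for \<epsilon>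
  have U_eq: "U (\<lambda>x. \<beta> x + \<epsilon> * d x) \<beta> = F \<epsilon>" for \<epsilon> unfolding U_def F_def Gdef by simp
  have U0: "U \<beta> \<beta> = F 0" unfolding U_def F_def Gdef by simp
  define h where "h \<epsilon> x = - d x * G (\<beta> x + \<epsilon> * d x) + (x - \<beta> x) * ((G (\<beta> x + \<epsilon> * d x) - G (\<beta> x)) / \<epsilon>)" for \<epsilon> x
  define f where "f x = d x * (- G (\<beta> x) + (x - \<beta> x) * g x)" for x
  have int: "set_integrable lborel {0..1} (\<lambda>x. (x - (\<beta> x + \<epsilon> * d x)) * G (\<beta> x + \<epsilon> * d x))" for \<epsilon>
    apply (rule borel_integrable_atLeastAtMost')
    apply (intro continuous_intros continuous_on_compose2[OF Gc])
    using cb cd by (auto intro: continuous_on_subset)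
  define A where "A \<epsilon> x = (x - (\<beta> x + \<epsilon> * d x)) * G (\<beta> x + \<epsilon> * d x)" for \<epsilon> x
  have quot: "(F \<epsilon> - F 0) / \<epsilon> = (LBINT x:{0..1}. h \<epsilon> x)" if "\<epsilon> \<noteq> 0" for \<epsilon>
  proof -
    have "(F \<epsilon> - F 0) / \<epsilon> = (LINT x|lborel. (indicator {0..1} x *\<^sub>R A \<epsilon> x - indicator {0..1} x *\<^sub>R A 0 x) / \<epsilon>)"
      unfolding F_def set_lebesgue_integral_def integral_divide_zero A_def
      using int[of \<epsilon>] int[of 0] unfolding set_integrable_def
      by (subst Bochner_Integration.integral_diff) auto
    also have "\<dots> = (LBINT x:{0..1}. h \<epsilon> x)"
      unfolding set_lebesgue_integral_def
      by (intro arg_cong[where f="integral\<^sup>L _"] ext) (use that in \<open>auto simp: h_def A_def indicator_def field_simps\<close>)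
    finally show ?thesis .
  qed
  have K0: "0 \<le> K" using bd[of 0] by auto
  have lim: "((\<lambda>\<epsilon>. LBINT x:{0..1}. h \<epsilon> x) \<longlongrightarrow> (LBINT x:{0..1}. f x)) (at 0)"
    unfolding tendsto_at_iff_sequentially comp_def set_lebesgue_integral_def
  proof (intro allI impI)
    fix X :: "nat \<Rightarrow> real" assume X0: "\<forall>i. X i \<in> UNIV - {0}" and Xl: "X \<longlonglongrightarrow> 0"
    define C where "C = K + (1 + K) * (L * K)"
    show "(\<lambda>i. LINT x|lborel. indicator {0..1} x *\<^sub>R h (X i) x) \<longlonglongrightarrow> (LINT x|lborel. indicator {0..1} x *\<^sub>R f x)"
    proof (rule integral_dominated_convergence[where w="\<lambda>x::real. indicator {0..1::real} x *\<^sub>R C"])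
      show "(\<lambda>x. indicator {0..1} x *\<^sub>R f x) \<in> borel_measurable lborel" unfolding f_def by measurable
      show "(\<lambda>x. indicator {0..1} x *\<^sub>R h (X i) x) \<in> borel_measurable lborel" for i unfolding h_def by measurable
      show "integrable lborel (\<lambda>x::real. indicator {0..1} x *\<^sub>R C)"
        using int01 by simp
      show "AE x in lborel. (\<lambda>i. indicator {0..1} x *\<^sub>R h (X i) x) \<longlonglongrightarrow> indicator {0..1} x *\<^sub>R f x"
      proof -
        have "AE x in lborel. x \<notin> S" by (rule AE_discrete_difference) (use S in \<open>auto intro: countable_finite\<close>)
        then show ?thesis
        proof eventually_elim
          case (elim x)
          show ?case
          proof (cases "x \<in> {0..1}")
            case False then show ?thesis by simp
          next
            case True
            have D: "(G has_real_derivative g x) (at (\<beta> x + 0 * d x))" using der[OF True elim] by simp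
            have D2: "((\<lambda>\<epsilon>. G (\<beta> x + \<epsilon> * d x)) has_real_derivative g x * d x) (at 0)"
              by (rule DERIV_chain2[where g="\<lambda>\<epsilon>. \<beta> x + \<epsilon> * d x" and x=0, OF D]) (auto intro!: derivative_eq_intros)
            have q: "((\<lambda>\<epsilon>. (G (\<beta> x + \<epsilon> * d x) - G (\<beta> x)) / \<epsilon>) \<longlongrightarrow> g x * d x) (at 0)"
              using D2 unfolding has_field_derivative_iff by simp
            have c: "((\<lambda>\<epsilon>. G (\<beta> x + \<epsilon> * d x)) \<longlongrightarrow> G (\<beta> x)) (at 0)"
              using DERIV_isCont[OF D2] by (simp add: isCont_def)
            have "((\<lambda>\<epsilon>. h \<epsilon> x) \<longlongrightarrow> - d x * G (\<beta> x) + (x - \<beta> x) * (g x * d x)) (at 0)"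
              unfolding h_def by (intro tendsto_intros c q)
            moreover have "- d x * G (\<beta> x) + (x - \<beta> x) * (g x * d x) = f x"
              unfolding f_def by (simp add: algebra_simps)
            ultimately have "((\<lambda>\<epsilon>. h \<epsilon> x) \<longlongrightarrow> f x) (at 0)" by simp
            then have "(\<lambda>i. h (X i) x) \<longlonglongrightarrow> f x" using X0 Xl unfolding tendsto_at_iff_sequentially comp_def by auto
            then show ?thesis using True by simp
          qed
        qed
      qed
      show "AE x in lborel. norm (indicator {0..1} x *\<^sub>R h (X i) x) \<le> indicator {0..1} x *\<^sub>R C" for i
      proof (rule AE_I2)
        fix x show "norm (indicator {0..1} x *\<^sub>R h (X i) x) \<le> indicator {0..1} x *\<^sub>R C"
        proof (cases "x \<in> {0..1}")
          case True
          have e: "X i \<noteq> 0" using X0 by auto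
          have 1: "\<bar>- d x * G (\<beta> x + X i * d x)\<bar> \<le> K"
          proof -
            have "\<bar>- d x * G (\<beta> x + X i * d x)\<bar> = \<bar>d x\<bar> * \<bar>G (\<beta> x + X i * d x)\<bar>" by (simp add: abs_mult)
            also have "\<dots> \<le> K * 1" by (rule mult_mono) (use bd[OF True] Gb K0 in auto)
            finally show ?thesis by simp
          qed
          have 2: "\<bar>(G (\<beta> x + X i * d x) - G (\<beta> x)) / X i\<bar> \<le> L * K"
          proof -
            have "\<bar>G (\<beta> x + X i * d x) - G (\<beta> x)\<bar> \<le> L * \<bar>X i * d x\<bar>" using Lip[of "\<beta> x + X i * d x" "\<beta> x"] by simp
            also have "\<dots> = \<bar>X i\<bar> * (L * \<bar>d x\<bar>)" by (simp add: abs_mult)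
            finally have "\<bar>(G (\<beta> x + X i * d x) - G (\<beta> x)) / X i\<bar> \<le> L * \<bar>d x\<bar>"
              using e by (simp add: divide_le_eq abs_divide mult.commute)
            also have "\<dots> \<le> L * K" by (rule mult_left_mono) (use bd[OF True] L0 in auto)
            finally show ?thesis .
          qed
          have 3: "\<bar>x - \<beta> x\<bar> \<le> 1 + K" using True bb[OF True] by auto
          have 4: "\<bar>(x - \<beta> x) * ((G (\<beta> x + X i * d x) - G (\<beta> x)) / X i)\<bar> \<le> (1 + K) * (L * K)"
            unfolding abs_mult by (rule mult_mono[OF 3 2]) (use K0 L0 in auto)
          have "\<bar>h (X i) x\<bar> \<le> \<bar>- d x * G (\<beta> x + X i * d x)\<bar> + \<bar>(x - \<beta> x) * ((G (\<beta> x + X i * d x) - G (\<beta> x)) / X i)\<bar>"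
            unfolding h_def by (rule abs_triangle_ineq)
          then have "\<bar>h (X i) x\<bar> \<le> C" unfolding C_def using 1 4 by linarith
          then show ?thesis using True by simp
        qed simp
      qed
    qed
  qed
  have ev: "\<forall>\<^sub>F \<epsilon> in at 0. (LBINT x:{0..1}. h \<epsilon> x) = (U (\<lambda>x. \<beta> x + \<epsilon> * d x) \<beta> - U \<beta> \<beta>) / \<epsilon>"
    unfolding eventually_at_filter by (auto simp: U_eq U0 quot)
  have "((\<lambda>\<epsilon>. (U (\<lambda>x. \<beta> x + \<epsilon> * d x) \<beta> - U \<beta> \<beta>) / \<epsilon>) \<longlongrightarrow> (LBINT x:{0..1}. f x)) (at 0)"
    using tendsto_cong[OF ev] lim by simp
  then show ?thesis unfolding DU_def f_def by (intro tendsto_Lim) auto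
qed

lemma lbint_hk:
  fixes f :: "real \<Rightarrow> real"
  assumes "set_integrable lborel {a..b} f" "(f has_integral I) {a..b}"
  shows "(LBINT x:{a..b}. f x) = I"
  using set_borel_integral_eq_integral(2)[OF assms(1)] assms(2) integral_unique by metis

lemma ftc:
  fixes P p :: "real \<Rightarrow> real"
  assumes "a \<le> b" "\<And>x. (P has_real_derivative p x) (at x)"
  shows "(p has_integral P b - P a) {a..b}"
  using assms
  by (intro fundamental_theorem_of_calculus)
     (auto simp: has_real_derivative_iff_has_vector_derivative intro: has_vector_derivative_at_within)

lemma split_int:
  fixes f p q :: "real \<Rightarrow> real"
  assumes "a \<le> c" "c \<le> b" "\<And>x. x \<in> {a..c} \<Longrightarrow> f x = p x" "\<And>x. x \<in> {c<..b} \<Longrightarrow> f x = q x"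
    "(p has_integral I1) {a..c}" "(q has_integral I2) {c..b}"
  shows "(f has_integral I1 + I2) {a..b}"
proof (rule has_integral_combine[OF assms(1,2)])
  show "(f has_integral I1) {a..c}" by (rule has_integral_spike_finite[of "{}" _ _ p]) (use assms in auto)
  show "(f has_integral I2) {c..b}" by (rule has_integral_spike_finite[of "{c}" _ _ q]) (use assms in auto)
qed

definition b1 :: "real \<Rightarrow> real" where "b1 x = 11/20 * x"
definition b2 :: "real \<Rightarrow> real" where "b2 x = min x (9/20 + x/10)"
definition G1 :: "real \<Rightarrow> real" where "G1 v = max 0 (min 1 (20/11 * v))"
definition G2 :: "real \<Rightarrow> real" where "G2 v = max 0 (min 1 (max v (10 * v - 9/2)))"

lemma G1_eq: "(LBINT y:{0..1}. (if v > b1 y then 1 else 0::real)) = G1 v"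
  by (rule inner_eq) (auto simp: G1_def b1_def max_def min_def)

lemma G2_eq: "(LBINT y:{0..1}. (if v > b2 y then 1 else 0::real)) = G2 v"
  by (rule inner_eq) (auto simp: G2_def b2_def max_def min_def)

lemma G1_lip: "\<bar>G1 u - G1 v\<bar> \<le> 10 * \<bar>u - v\<bar>"
  by (auto simp: G1_def max_def min_def abs_if)

lemma G2_lip: "\<bar>G2 u - G2 v\<bar> \<le> 10 * \<bar>u - v\<bar>"
  by (auto simp: G2_def max_def min_def abs_if)

lemma cont_b1: "continuous_on UNIV b1" unfolding b1_def by (intro continuous_intros)
lemma cont_b2: "continuous_on UNIV b2" unfolding b2_def by (intro continuous_intros) auto

lemma G1_der: "x \<in> {0..1} \<Longrightarrow> x \<notin> {0,1} \<Longrightarrow> (G1 has_real_derivative 20/11) (at (b1 x))"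
  apply (rule has_field_derivative_transform_within_open[where f="\<lambda>v. 20/11 * v" and S="{0<..<11/20}"])
  apply (auto intro!: derivative_eq_intros simp: b1_def G1_def)
  done

lemma G2_der: "x \<in> {0..1} \<Longrightarrow> x \<notin> {0,1/2,1} \<Longrightarrow> (G2 has_real_derivative (if x < 1/2 then 1 else 10)) (at (b2 x))"
proof -
  assume x: "x \<in> {0..1}" "x \<notin> {0,1/2,1}"
  show ?thesis
  proof (cases "x < 1/2")
    case True
    have "b2 x = x" using True by (simp add: b2_def)
    then show ?thesis using True x
      apply simp
      apply (rule has_field_derivative_transform_within_open[where f="\<lambda>v. v" and S="{0<..<1/2}"])
      apply (auto intro!: derivative_eq_intros simp: G2_def)
      done
  next
    case False
    then have F: "x > 1/2" using x by auto
    have "b2 x = 9/20 + x/10" using F by (simp add: b2_def)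
    then show ?thesis using F x
      apply simp
      apply (rule has_field_derivative_transform_within_open[where f="\<lambda>v. 10 * v - 9/2" and S="{1/2<..<11/20}"])
      apply (auto intro!: derivative_eq_intros simp: G2_def)
      done
  qed
qed

lemma DU1: "DU b1 (\<lambda>x. b2 x - b1 x) = - 9/880"
proof -
  have "DU b1 (\<lambda>x. b2 x - b1 x) = (LBINT x:{0..1}. (b2 x - b1 x) * (- G1 (b1 x) + (x - b1 x) * (\<lambda>_. 20/11) x))"
    apply (rule DU_formula[where L=10 and K=1 and S="{0,1}"])
    apply (auto simp: G1_eq G1_lip G1_der cont_b1 cont_b2 continuous_on_diff)
    apply (auto simp: G1_def b1_def b2_def min_def max_def)
    done
  also have "\<dots> = (LBINT x:{0..1}. - 2/11 * x * (min x (9/20 + x/10) - 11/20 * x))"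
    by (rule set_lebesgue_integral_cong) (auto simp: G1_def b1_def b2_def min_def max_def field_simps)
  also have "\<dots> = (- 3/880) + (- 6/880)"
  proof (rule lbint_hk)
    show "set_integrable lborel {0..1} (\<lambda>x::real. - 2/11 * x * (min x (9/20 + x/10) - 11/20 * x))"
      by (rule borel_integrable_atLeastAtMost') (intro continuous_intros; simp)
    show "((\<lambda>x::real. - 2/11 * x * (min x (9/20 + x/10) - 11/20 * x)) has_integral (- 3/880) + (- 6/880)) {0..1}"
    proof (rule split_int[where c="1/2" and p="\<lambda>x. -9/110 * x^2" and q="\<lambda>x. -9/110 * (x - x^2)"])
      show "((\<lambda>x::real. -9/110 * x^2) has_integral - 3/880) {0..1/2}"
      proof -
        have "((\<lambda>x::real. -9/110 * x^2) has_integral ((\<lambda>x. -9/110 * x^3 / 3) (1/2) - (\<lambda>x. -9/110 * x^3 / 3) (0))) {0..1/2}"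
          by (rule ftc) (auto intro!: derivative_eq_intros simp: power2_eq_square power3_eq_cube field_simps)
        then show ?thesis by (simp add: power2_eq_square power3_eq_cube)
      qed
      show "((\<lambda>x::real. -9/110 * (x - x^2)) has_integral - 6/880) {1/2..1}"
      proof -
        have "((\<lambda>x::real. -9/110 * (x - x^2)) has_integral ((\<lambda>x. -9/110 * (x^2/2 - x^3 / 3)) (1) - (\<lambda>x. -9/110 * (x^2/2 - x^3 / 3)) (1/2))) {1/2..1}"
          by (rule ftc) (auto intro!: derivative_eq_intros simp: power2_eq_square power3_eq_cube field_simps)
        then show ?thesis by (simp add: power2_eq_square power3_eq_cube)
      qed
    qed (auto simp: min_def field_simps power2_eq_square)
  qed
  finally show ?thesis by simp
qed

lemma DU2: "DU b2 (\<lambda>x. b2 x - b1 x) = 9/320"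
proof -
  have "DU b2 (\<lambda>x. b2 x - b1 x) = (LBINT x:{0..1}. (b2 x - b1 x) * (- G2 (b2 x) + (x - b2 x) * (\<lambda>x. if x < 1/2 then 1 else 10) x))"
    apply (rule DU_formula[where L=10 and K=1 and S="{0,1/2,1}", OF G2_eq G2_lip _ _ _ _ _ _ _ G2_der])
    apply (auto simp: G2_eq G2_lip G2_der cont_b1 cont_b2 continuous_on_diff)
    apply (auto simp: G2_def b1_def b2_def min_def max_def)
    done
  also have "\<dots> = (LBINT x:{0..1}. (min x (9/20 + x/10) - 11/20 * x) * (- x + 10 * (x - min x (9/20 + x/10))))"
    by (rule set_lebesgue_integral_cong) (auto simp: G2_def b1_def b2_def min_def max_def field_simps)
  also have "\<dots> = (- 3/160) + 3/64"
  proof (rule lbint_hk)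
    show "set_integrable lborel {0..1} (\<lambda>x::real. (min x (9/20 + x/10) - 11/20 * x) * (- x + 10 * (x - min x (9/20 + x/10))))"
      by (rule borel_integrable_atLeastAtMost') (intro continuous_intros; simp)
    show "((\<lambda>x::real. (min x (9/20 + x/10) - 11/20 * x) * (- x + 10 * (x - min x (9/20 + x/10)))) has_integral (- 3/160) + 3/64) {0..1}"
    proof (rule split_int[where c="1/2" and p="\<lambda>x. -9/20 * x^2" and q="\<lambda>x. 9/20 * (1 - x) * (8 * x - 9/2)"])
      show "((\<lambda>x::real. -9/20 * x^2) has_integral - 3/160) {0..1/2}"
      proof -
        have "((\<lambda>x::real. -9/20 * x^2) has_integral ((\<lambda>x. -9/20 * x^3 / 3) (1/2) - (\<lambda>x. -9/20 * x^3 / 3) (0))) {0..1/2}"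
          by (rule ftc) (auto intro!: derivative_eq_intros simp: power2_eq_square power3_eq_cube field_simps)
        then show ?thesis by (simp add: power2_eq_square power3_eq_cube)
      qed
      show "((\<lambda>x::real. 9/20 * (1 - x) * (8 * x - 9/2)) has_integral 3/64) {1/2..1}"
      proof -
        have "((\<lambda>x::real. 9/20 * (1 - x) * (8 * x - 9/2)) has_integral ((\<lambda>x. 9/20 * (- 9/2 * x + 25/4 * x^2 - 8/3 * x^3)) (1) - (\<lambda>x. 9/20 * (- 9/2 * x + 25/4 * x^2 - 8/3 * x^3)) (1/2))) {1/2..1}"
          by (rule ftc) (auto intro!: derivative_eq_intros simp: power2_eq_square power3_eq_cube field_simps)
        then show ?thesis by (simp add: power2_eq_square power3_eq_cube)
      qed
    qed (auto simp: min_def field_simps power2_eq_square)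
  qed
  finally show ?thesis by simp
qed


lemma b1_in: assumes "0 < \<delta>" "\<delta> \<le> 1/10" shows "b1 \<in> Bdelta \<delta>"
proof -
  have wd: "weak_deriv b1 (\<lambda>_. 11/20)"
    unfolding weak_deriv_def
  proof (intro conjI ballI)
    show "set_integrable lborel {0..1} (\<lambda>_::real. 11/20::real)"
      by (rule borel_integrable_atLeastAtMost') (rule continuous_on_const)
    fix x :: real assume x: "x \<in> {0..1}"
    have "(LBINT t:{0..x}. (11/20::real)) = 11/20 * x - 11/20 * 0"
    proof (rule lbint_hk)
      show "set_integrable lborel {0..x} (\<lambda>_::real. 11/20::real)"
        by (rule borel_integrable_atLeastAtMost') (rule continuous_on_const)
      show "((\<lambda>_::real. 11/20::real) has_integral 11/20 * x - 11/20 * 0) {0..x}"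
        by (rule ftc[where P="\<lambda>t. 11/20 * t"]) (use x in \<open>auto intro!: derivative_eq_intros\<close>)
    qed
    then show "b1 x = b1 0 + (LBINT t:{0..x}. 11/20)" by (simp add: b1_def)
  qed
  show ?thesis unfolding Bdelta_def W11_def
    using wd assms by (auto simp: b1_def intro!: exI[of _ "\<lambda>_. 11/20"])
qed

lemma b2_in: assumes "0 < \<delta>" "\<delta> \<le> 1/10" shows "b2 \<in> Bdelta \<delta>"
proof -
  define g :: "real \<Rightarrow> real" where "g t = (if t \<le> 1/2 then 1 else 1/10)" for t
  have gm[measurable]: "g \<in> borel_measurable borel" unfolding g_def by measurable
  have si: "set_integrable lborel {0..x} g" for x :: real
    unfolding set_integrable_def
    by (rule integrableI_bounded_set_indicator[where B=1]) (auto simp: g_def emeasure_lborel_Icc_eq)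
  have wd: "weak_deriv b2 g"
    unfolding weak_deriv_def
  proof (intro conjI ballI)
    show "set_integrable lborel {0..1} g" by (rule si)
    fix x :: real assume x: "x \<in> {0..1}"
    show "b2 x = b2 0 + (LBINT t:{0..x}. g t)"
    proof (cases "x \<le> 1/2")
      case True
      have "(LBINT t:{0..x}. g t) = x - 0"
      proof (rule lbint_hk[OF si])
        have h1: "((\<lambda>_. 1) has_integral x - 0) {0..x}"
          by (rule ftc[where P="\<lambda>t. t"]) (use x in \<open>auto intro!: derivative_eq_intros\<close>)
        show "(g has_integral x - 0) {0..x}"
          by (rule has_integral_spike_finite[of "{}" _ _ "\<lambda>_. 1"]) (use h1 True in \<open>auto simp: g_def\<close>)
      qed
      then show ?thesis using True by (simp add: b2_def min_def)
    next
      case False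
      have "(LBINT t:{0..x}. g t) = (1/2 - 0) + (1/10 * x - 1/10 * (1/2))"
      proof (rule lbint_hk[OF si])
        show "(g has_integral (1/2 - 0) + (1/10 * x - 1/10 * (1/2))) {0..x}"
        proof (rule split_int[where c="1/2" and p="\<lambda>_. 1" and q="\<lambda>_. 1/10"])
          show "((\<lambda>_::real. 1::real) has_integral 1/2 - 0) {0..1/2::real}"
            by (rule ftc[where P="\<lambda>t. t"]) (auto intro!: derivative_eq_intros)
          show "((\<lambda>_::real. 1/10::real) has_integral 1/10 * x - 1/10 * (1/2)) {1/2..x}"
            by (rule ftc[where P="\<lambda>t. 1/10 * t"]) (use False in \<open>auto intro!: derivative_eq_intros\<close>)
        qed (use False in \<open>auto simp: g_def\<close>)
      qed
      then show ?thesis using False by (simp add: b2_def min_def)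
    qed
  qed
  show ?thesis unfolding Bdelta_def W11_def
    using wd assms by (auto simp: b2_def min_def g_def intro!: exI[of _ g])
qed

theorem proposition2:
  fixes \<delta> :: real
  assumes "0 < \<delta>" and "\<delta> \<le> 1/10"
  shows "\<not> monotone_DU \<delta> \<and> \<not> pseudo_monotone_DU \<delta> \<and> \<not> quasi_monotone_DU \<delta>"
proof -
  have i1: "b1 \<in> Bdelta \<delta>" and i2: "b2 \<in> Bdelta \<delta>" using b1_in b2_in assms by auto
  show ?thesis
    unfolding monotone_DU_def pseudo_monotone_DU_def quasi_monotone_DU_def
    using i1 i2 DU1 DU2 by force
qed

end
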